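(* In the D-LORD setting of the context, suppose the null $p$-values are conditionally uniformly conservative and $\tau_j\ge\alpha_j$ (with $\tau_j>0$) for each $j\in\mathbb N$. (a) Any procedure with $\widehat{\mathrm{FDP}}_{\mathrm{D\text{-}LORD}}(t)\le\alpha$ for all $t\in\mathbb N$ satisfies $\mathrm{mFDR}(t)\le\alpha$ for all $t\in\mathbb N$. (b) If moreover the null $p$-values are independent of each other and of the non-nulls, and for all $t$ both $\alpha_t$ and $1-\tau_t$ are monotonic functions of the past, then any procedure with $\widehat{\mathrm{FDP}}_{\mathrm{D\text{-}LORD}}(t)\le\alpha$ for all $t$ satisfies $\mathrm{FDR}(t)\le\alpha$ for all $t\in\mathbb N$.
   Context: Let $P_1,P_2,\dots$ be $p$-values for hypotheses $H_1,H_2,\dots$, $\mathcal H_0\subseteq\mathbb N$ the set of true null indices, $\alpha\in(0,1)$. Sequences $\{\alpha_j\},\{\tau_j\}$ in $[0,1]$ define $S_j=\mathbf 1\{P_j\le\tau_j\}$, $R_j=\mathbf 1\{P_j\le\alpha_j\}$, $R(t)=\{j\le t:R_j=1\}$. Filtration $\mathcal F^{t}=\sigma(R_{1:t},S_{1:t})$, $\mathcal F^0$ trivial; $\alpha_t,\tau_t$ are $\mathcal F^{t-1}$-measurable (deterministic functions of $(R_{1:t-1},S_{1:t-1})$). Such a function is a monotonic function of the past if it is coordinatewise nondecreasing in each $R_j$ and coordinatewise nonincreasing in each $S_j$. Null $p$-values are conditionally uniformly conservative if for every $t\in\mathcal H_0$ and all $x,\tau\in(0,1)$, $\Pr(P_t/\tau\le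 x\mid P_t\le\tau,\mathcal F^{t-1})\le x$. Define $\widehat{\mathrm{FDP}}_{\mathrm{D\text{-}LORD}}(t)=\big(\sum_{j\le t}\frac{\alpha_j}{\tau_j}\mathbf 1\{P_j\le\tau_j\}\big)/(|R(t)|\vee1)$, $\mathrm{FDR}(t)=\mathbb E[|\mathcal H_0\cap R(t)|/(|R(t)|\vee1)]$, $\mathrm{mFDR}(t)=\mathbb E[|\mathcal H_0\cap R(t)|]/\mathbb E[|R(t)|\vee1]$. *)

theory Defs
  imports "HOL-Probability.Probability"
begin

text \<open>A history is the list of pairs (R_j, S_j) for j = 1, ..., t-1 (position j-1 holds index j).
  The test levels are given by rules A, T mapping a history to alpha_t, tau_t
  (deterministic functions of the past). p is the sequence of p-values (index 0 unused).\<close>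

type_synonym history = "(bool \<times> bool) list"

fun hist :: "(history \<Rightarrow> real) \<Rightarrow> (history \<Rightarrow> real) \<Rightarrow> (nat \<Rightarrow> real) \<Rightarrow> nat \<Rightarrow> history" where
  "hist A T p 0 = []"
| "hist A T p (Suc n) = hist A T p n @ [(p (Suc n) \<le> A (hist A T p n), p (Suc n) \<le> T (hist A T p n))]"

definition alpha_seq :: "(history \<Rightarrow> real) \<Rightarrow> (history \<Rightarrow> real) \<Rightarrow> (nat \<Rightarrow> real) \<Rightarrow> nat \<Rightarrow> real" where
  "alpha_seq A T p t = A (hist A T p (t - 1))"

definition tau_seq :: "(history \<Rightarrow> real) \<Rightarrow> (history \<Rightarrow> real) \<Rightarrow> (nat \<Rightarrow> real) \<Rightarrow> nat \<Rightarrow> real" where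
  "tau_seq A T p t = T (hist A T p (t - 1))"

definition rej_set :: "(history \<Rightarrow> real) \<Rightarrow> (history \<Rightarrow> real) \<Rightarrow> (nat \<Rightarrow> real) \<Rightarrow> nat \<Rightarrow> nat set" where
  "rej_set A T p t = {j \<in> {1..t}. p j \<le> alpha_seq A T p j}"

definition fdp_hat :: "(history \<Rightarrow> real) \<Rightarrow> (history \<Rightarrow> real) \<Rightarrow> (nat \<Rightarrow> real) \<Rightarrow> nat \<Rightarrow> real" where
  "fdp_hat A T p t =
     (\<Sum>j\<in>{1..t}. alpha_seq A T p j / tau_seq A T p j * (if p j \<le> tau_seq A T p j then 1 else 0))
     / max (real (card (rej_set A T p t))) 1"

definition mono_past :: "(history \<Rightarrow> real) \<Rightarrow> bool" where
  "mono_past f \<longleftrightarrow> (\<forall>h h'. length h = length h' \<longrightarrow>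
      (\<forall>i < length h. fst (h ! i) \<le> fst (h' ! i) \<and> snd (h' ! i) \<le> snd (h ! i)) \<longrightarrow> f h \<le> f h')"

end

theory Submission
  imports Defs
begin


lemma hist_length[simp]: "length (hist A T p n) = n"
  by (induction n) auto

lemma hist_take: "k \<le> n \<Longrightarrow> take k (hist A T p n) = hist A T p k"
proof (induction n)
  case 0 then show ?case by simp
next
  case (Suc n)
  show ?case
  proof (cases "k = Suc n")
    case True then show ?thesis by (metis hist_length order_refl take_all)
  next
    case False then have "k \<le> n" using Suc by simp
    then show ?thesis using Suc by simp
  qed
qed

lemma hist_nth: assumes "1 \<le> j" "j \<le> n"
  shows "hist A T p n ! (j-1) = (p j \<le> A (hist A T p (j-1)), p j \<le> T (hist A T p (j-1)))"
proof -
  obtain m where m: "j = Suc m" using assms by (cases j) auto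
  have "hist A T p n ! (j-1) = take j (hist A T p n) ! (j-1)" using m by simp
  also have "\<dots> = hist A T p j ! (j-1)" using assms by (simp add: hist_take)
  also have "\<dots> = (p j \<le> A (hist A T p (j-1)), p j \<le> T (hist A T p (j-1)))"
    using m by (simp add: nth_append)
  finally show ?thesis .
qed

lemma hist_cong: "(\<And>i. 1 \<le> i \<Longrightarrow> i \<le> n \<Longrightarrow> p i = q i) \<Longrightarrow> hist A T p n = hist A T q n"
  by (induction n) auto

lemma rej_set_hist: "rej_set A T p t = {j \<in> {1..t}. fst (hist A T p t ! (j-1))}"
  unfolding rej_set_def alpha_seq_def using hist_nth[of _ t A T p] by auto

lemma hist_measurable:
  assumes "\<And>i. (\<lambda>x. f x i) \<in> borel_measurable N"
  shows "(\<lambda>x. hist A T (f x) n) \<in> N \<rightarrow>\<^sub>M count_space UNIV"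
proof (induction n)
  case 0 then show ?case by simp
next
  case (Suc n)
  have "(\<lambda>x. (\<lambda>h x. h @ [(f x (Suc n) \<le> A h, f x (Suc n) \<le> T h)]) (hist A T (f x) n) x) \<in> N \<rightarrow>\<^sub>M count_space UNIV"
  proof (rule measurable_compose_countable'[OF _ Suc])
    fix h :: history
    have "(\<lambda>x. (f x (Suc n) \<le> A h, f x (Suc n) \<le> T h)) \<in> N \<rightarrow>\<^sub>M count_space UNIV"
      using assms by measurable
    then show "(\<lambda>x. h @ [(f x (Suc n) \<le> A h, f x (Suc n) \<le> T h)]) \<in> N \<rightarrow>\<^sub>M count_space UNIV"
      by (rule measurable_compose[where N="count_space UNIV"]) simp
  qed simp
  then show ?case by simp
qed

lemma le_zero_eps: fixes y :: real assumes "\<And>x. 0 < x \<Longrightarrow> x < 1 \<Longrightarrow> y \<le> x" shows "y \<le> 0"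
proof (rule ccontr)
  assume "\<not> y \<le> 0"
  then have "y \<le> min (y/2) (1/2)" by (intro assms) auto
  then show False using \<open>\<not> y \<le> 0\<close> by linarith
qed

lemma le_lim_s: fixes y b a :: real assumes "0 \<le> a" "a < 1" "0 \<le> y"
  "\<And>s. a < s \<Longrightarrow> s < 1 \<Longrightarrow> y * s \<le> b" shows "y \<le> b"
proof (rule ccontr)
  assume n: "\<not> y \<le> b"
  have h: "y * ((a+1)/2) \<le> b" using assms by (intro assms(4)) auto
  have "0 \<le> y * ((a+1)/2)" using assms by simp
  then have "0 \<le> b" using h by linarith
  then have yp: "y > 0" using n by linarith
  define q where "q = b / y"
  have bq: "b = y * q" unfolding q_def using yp by simp
  have b1: "q < 1" using n yp unfolding q_def by (simp add: divide_less_eq)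
  define s where "s = (max a q + 1) / 2"
  have "a < s" "s < 1" "q < s" using b1 assms(2) unfolding s_def by auto
  then have "y * s \<le> b" "b < y * s" using assms(4) bq yp by auto
  then show False by simp
qed

lemma div_le_div_iff: "0 < (t::real) \<Longrightarrow> (x/t \<le> a/t) = (x \<le> a)"
  by (simp add: divide_le_cancel)

lemma (in prob_space) key_cond:
  assumes cu: "\<And>x \<tau>. 0<x \<Longrightarrow> x<1 \<Longrightarrow> 0<\<tau> \<Longrightarrow> \<tau><1 \<Longrightarrow>
      measure M {\<omega>\<in>space M. X \<omega>/\<tau> \<le> x \<and> X \<omega> \<le> \<tau> \<and> W \<omega>} \<le> x * measure M {\<omega>\<in>space M. X \<omega> \<le> \<tau> \<and> W \<omega>}"
    and X: "X \<in> borel_measurable M" and W: "Measurable.pred M W"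
    and a: "0 \<le> a" "a \<le> \<tau>" "0 < \<tau>" "\<tau> \<le> 1"
  shows "prob {\<omega>\<in>space M. X \<omega> \<le> a \<and> W \<omega>} \<le> a/\<tau> * prob {\<omega>\<in>space M. X \<omega> \<le> \<tau> \<and> W \<omega>}"
proof -
  have ev: "\<And>c. {\<omega>\<in>space M. X \<omega> \<le> c \<and> W \<omega>} \<in> events" using X W by measurable
  have ev2: "\<And>c d. {\<omega>\<in>space M. X \<omega>/d \<le> c \<and> X \<omega> \<le> d \<and> W \<omega>} \<in> events" using X W by measurable
  show ?thesis
  proof (cases "a = \<tau>")
    case True then show ?thesis using a by simp
  next
    case False
    then have alt: "a < \<tau>" using a by simp
    show ?thesis
    proof (cases "a = 0")
      case True
      have "prob {\<omega>\<in>space M. X \<omega> \<le> a \<and> W \<omega>} \<le> 0"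
      proof (rule le_zero_eps)
        fix x :: real assume x: "0 < x" "x < 1"
        have sub: "{\<omega>\<in>space M. X \<omega> \<le> a \<and> W \<omega>} \<subseteq> {\<omega>\<in>space M. X \<omega>/(1/2) \<le> x \<and> X \<omega> \<le> 1/2 \<and> W \<omega>}"
          using True x by auto
        have "prob {\<omega>\<in>space M. X \<omega> \<le> a \<and> W \<omega>} \<le> prob {\<omega>\<in>space M. X \<omega>/(1/2) \<le> x \<and> X \<omega> \<le> 1/2 \<and> W \<omega>}"
          by (rule finite_measure_mono[OF sub ev2])
        also have "\<dots> \<le> x * prob {\<omega>\<in>space M. X \<omega> \<le> 1/2 \<and> W \<omega>}" by (rule cu) (use x in auto)
        also have "\<dots> \<le> x * 1" using x by (intro mult_left_mono) auto
        finally show "prob {\<omega>\<in>space M. X \<omega> \<le> a \<and> W \<omega>} \<le> x" by simp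
      qed
      then show ?thesis using True by simp
    next
      case False
      then have a0: "0 < a" using a by simp
      show ?thesis
      proof (cases "\<tau> < 1")
        case True
        have "{\<omega>\<in>space M. X \<omega> \<le> a \<and> W \<omega>} = {\<omega>\<in>space M. X \<omega>/\<tau> \<le> a/\<tau> \<and> X \<omega> \<le> \<tau> \<and> W \<omega>}"
          using a alt by (auto simp: div_le_div_iff)
        then show ?thesis using cu[of "a/\<tau>" \<tau>] a0 alt True a by simp
      next
        case False
        then have t1: "\<tau> = 1" using a by simp
        have "prob {\<omega>\<in>space M. X \<omega> \<le> a \<and> W \<omega>} \<le> a * prob {\<omega>\<in>space M. X \<omega> \<le> 1 \<and> W \<omega>}"
        proof (rule le_lim_s[of a])
          fix s :: real assume s: "a < s" "s < 1"
          have eq: "{\<omega>\<in>space M. X \<omega> \<le> a \<and> W \<omega>} = {\<omega>\<in>space M. X \<omega>/s \<le> a/s \<and> X \<omega> \<le> s \<and> W \<omega>}"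
            using a0 s by (auto simp: div_le_div_iff)
          have "prob {\<omega>\<in>space M. X \<omega> \<le> a \<and> W \<omega>} \<le> a/s * prob {\<omega>\<in>space M. X \<omega> \<le> s \<and> W \<omega>}"
            unfolding eq using cu[of "a/s" s] a0 s by simp
          also have "\<dots> \<le> a/s * prob {\<omega>\<in>space M. X \<omega> \<le> 1 \<and> W \<omega>}"
            using a0 s by (intro mult_left_mono finite_measure_mono ev) auto
          finally have "prob {\<omega>\<in>space M. X \<omega> \<le> a \<and> W \<omega>} \<le> a/s * prob {\<omega>\<in>space M. X \<omega> \<le> 1 \<and> W \<omega>}" .
          then show "prob {\<omega>\<in>space M. X \<omega> \<le> a \<and> W \<omega>} * s \<le> a * prob {\<omega>\<in>space M. X \<omega> \<le> 1 \<and> W \<omega>}"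
            using s a0 by (simp add: field_simps)
        qed (use a t1 False alt in auto)
        then show ?thesis using t1 by simp
      qed
    qed
  qed
qed

lemma (in prob_space) int_decomp:
  fixes W :: "'a \<Rightarrow> 'b::countable" and X :: "'a \<Rightarrow> real" and g c :: "'b \<Rightarrow> real"
  assumes W: "W \<in> M \<rightarrow>\<^sub>M count_space UNIV" and Ws: "finite Ws" "\<And>\<omega>. \<omega> \<in> space M \<Longrightarrow> W \<omega> \<in> Ws"
    and X: "X \<in> borel_measurable M"
  shows "integrable M (\<lambda>\<omega>. if X \<omega> \<le> c (W \<omega>) then g (W \<omega>) else 0)"
    "(\<integral>\<omega>. (if X \<omega> \<le> c (W \<omega>) then g (W \<omega>) else 0) \<partial>M) = (\<Sum>w\<in>Ws. g w * prob {\<omega>\<in>space M. X \<omega> \<le> c w \<and> W \<omega> = w})"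
proof -
  have ev: "{\<omega>\<in>space M. X \<omega> \<le> c w \<and> W \<omega> = w} \<in> events" for w
  proof -
    have "{\<omega>\<in>space M. X \<omega> \<le> c w \<and> W \<omega> = w} = {\<omega>\<in>space M. X \<omega> \<le> c w} \<inter> (W -` {w} \<inter> space M)" by auto
    also have "\<dots> \<in> events"
    proof (rule sets.Int)
      show "{\<omega>\<in>space M. X \<omega> \<le> c w} \<in> events" using X by measurable
      show "W -` {w} \<inter> space M \<in> events" using measurable_sets[OF W, of "{w}"] by simp
    qed
    finally show ?thesis .
  qed
  have pt: "\<And>\<omega>. \<omega> \<in> space M \<Longrightarrow> (if X \<omega> \<le> c (W \<omega>) then g (W \<omega>) else 0) =
     (\<Sum>w\<in>Ws. g w * indicator {\<omega>\<in>space M. X \<omega> \<le> c w \<and> W \<omega> = w} \<omega>)"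
  proof -
    fix \<omega> assume om: "\<omega> \<in> space M"
    have "(\<Sum>w\<in>Ws. g w * indicator {\<omega>\<in>space M. X \<omega> \<le> c w \<and> W \<omega> = w} \<omega>) =
       (\<Sum>w\<in>Ws. if w = W \<omega> then (if X \<omega> \<le> c (W \<omega>) then g (W \<omega>) else 0) else 0)"
      using om by (intro sum.cong) (auto simp: indicator_def)
    also have "\<dots> = (if X \<omega> \<le> c (W \<omega>) then g (W \<omega>) else 0)"
      using Ws om by (simp add: sum.delta')
    finally show "?thesis \<omega>" by simp
  qed
  have int: "integrable M (\<lambda>\<omega>. \<Sum>w\<in>Ws. g w * indicator {\<omega>\<in>space M. X \<omega> \<le> c w \<and> W \<omega> = w} \<omega>)"
    apply (rule Bochner_Integration.integrable_sum)
    apply (rule integrable_mult_right)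
    apply (rule integrable_real_indicator)
    using ev apply simp
    apply (simp add: less_top[symmetric])
    done
  show "integrable M (\<lambda>\<omega>. if X \<omega> \<le> c (W \<omega>) then g (W \<omega>) else 0)"
  proof -
    have "integrable M (\<lambda>\<omega>. if X \<omega> \<le> c (W \<omega>) then g (W \<omega>) else 0) = integrable M (\<lambda>\<omega>. \<Sum>w\<in>Ws. g w * indicator {\<omega>\<in>space M. X \<omega> \<le> c w \<and> W \<omega> = w} \<omega>)"
      by (rule Bochner_Integration.integrable_cong[OF refl]) (rule pt)
    then show ?thesis using int by simp
  qed
  have "(\<integral>\<omega>. (if X \<omega> \<le> c (W \<omega>) then g (W \<omega>) else 0) \<partial>M) =
     (\<integral>\<omega>. (\<Sum>w\<in>Ws. g w * indicator {\<omega>\<in>space M. X \<omega> \<le> c w \<and> W \<omega> = w} \<omega>) \<partial>M)"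
    using pt by (intro Bochner_Integration.integral_cong) auto
  also have "\<dots> = (\<Sum>w\<in>Ws. g w * prob {\<omega>\<in>space M. X \<omega> \<le> c w \<and> W \<omega> = w})"
    using ev by (subst Bochner_Integration.integral_sum) (auto intro!: integrable_mult_right integrable_real_indicator sum.cong
       simp: Int_absorb2 sets.sets_into_space less_top[symmetric])
  finally show "(\<integral>\<omega>. (if X \<omega> \<le> c (W \<omega>) then g (W \<omega>) else 0) \<partial>M) = (\<Sum>w\<in>Ws. g w * prob {\<omega>\<in>space M. X \<omega> \<le> c w \<and> W \<omega> = w})" .
qed

lemma hist_mono:
  assumes mA: "mono_past A" and mT: "mono_past (\<lambda>h. 1 - T h)"
    and pq: "\<And>i. i \<noteq> j \<Longrightarrow> p i = q i"
    and qj: "q j \<le> A (hist A T q (j-1))" and pj: "p j \<le> T (hist A T p (j-1))" and j: "1 \<le> j"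
  shows "\<forall>i<n. fst (hist A T p n ! i) \<le> fst (hist A T q n ! i) \<and> snd (hist A T q n ! i) \<le> snd (hist A T p n ! i)"
proof (induction n)
  case 0 then show ?case by simp
next
  case (Suc n)
  let ?hp = "hist A T p n" and ?hq = "hist A T q n"
  have Ale: "A ?hp \<le> A ?hq" using mA Suc unfolding mono_past_def by auto
  have Tle: "1 - T ?hp \<le> 1 - T ?hq" using mT Suc unfolding mono_past_def by auto
  have e1: "p (Suc n) \<le> A ?hp \<longrightarrow> q (Suc n) \<le> A ?hq"
  proof (cases "Suc n = j")
    case True then have "n = j - 1" by simp
    then show ?thesis using qj True by simp
  next
    case False then show ?thesis using pq[of "Suc n"] Ale by auto
  qed
  have e2: "q (Suc n) \<le> T ?hq \<longrightarrow> p (Suc n) \<le> T ?hp"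
  proof (cases "Suc n = j")
    case True then have "n = j - 1" by simp
    then show ?thesis using pj True by simp
  next
    case False then show ?thesis using pq[of "Suc n"] Tle by auto
  qed
  show ?case
  proof (intro allI impI)
    fix i assume i: "i < Suc n"
    show "fst (hist A T p (Suc n) ! i) \<le> fst (hist A T q (Suc n) ! i) \<and>
          snd (hist A T q (Suc n) ! i) \<le> snd (hist A T p (Suc n) ! i)"
    proof (cases "i < n")
      case True then show ?thesis using Suc by (simp add: nth_append)
    next
      case False then have "i = n" using i by simp
      then show ?thesis using e1 e2 by (simp add: nth_append le_bool_def)
    qed
  qed
qed

lemma rej_mono:
  assumes mA: "mono_past A" and mT: "mono_past (\<lambda>h. 1 - T h)"
    and pq: "\<And>i. i \<noteq> j \<Longrightarrow> p i = q i"
    and qj: "q j \<le> A (hist A T q (j-1))" and pj: "p j \<le> T (hist A T p (j-1))" and j: "1 \<le> j"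
  shows "card (rej_set A T p t) \<le> card (rej_set A T q t)"
proof -
  have m: "\<forall>i<t. fst (hist A T p t ! i) \<le> fst (hist A T q t ! i) \<and> snd (hist A T q t ! i) \<le> snd (hist A T p t ! i)"
    by (rule hist_mono[OF assms])
  have "rej_set A T p t \<subseteq> rej_set A T q t"
    unfolding rej_set_hist
  proof safe
    fix k assume k: "k \<in> {1..t}" "fst (hist A T p t ! (k - 1))"
    then have "k - 1 < t" by auto
    then show "fst (hist A T q t ! (k - 1))" using m k(2) by (auto simp: le_bool_def)
  qed
  then show ?thesis by (intro card_mono) (auto simp: rej_set_def)
qed

lemma hist_eq:
  assumes pq: "\<And>i. i \<noteq> j \<Longrightarrow> p i = q i"
    and "p j \<le> A (hist A T p (j-1))" "p j \<le> T (hist A T p (j-1))"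
    "q j \<le> A (hist A T q (j-1))" "q j \<le> T (hist A T q (j-1))"
  shows "hist A T p n = hist A T q n"
proof (induction n)
  case 0 then show ?case by simp
next
  case (Suc n)
  show ?case
  proof (cases "Suc n = j")
    case True
    show ?thesis using Suc assms by (simp add: True[symmetric])
  next
    case False then show ?thesis using Suc pq[of "Suc n"] by simp
  qed
qed

lemma (in prob_space) indep_hall:
  fixes P :: "nat \<Rightarrow> 'a \<Rightarrow> real"
  assumes ind: "indep_vars
            (\<lambda>k. PiM (case k of None \<Rightarrow> {j. 1 \<le> j \<and> j \<notin> H0} | Some j \<Rightarrow> {j}) (\<lambda>_. borel))
            (\<lambda>k \<omega>. restrict (\<lambda>j. P j \<omega>) (case k of None \<Rightarrow> {j. 1 \<le> j \<and> j \<notin> H0} | Some j \<Rightarrow> {j}))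
            (insert None (Some ` {j \<in> H0. 1 \<le> j}))"
    and j: "j \<in> H0" "1 \<le> j"
  shows "prob {\<omega>\<in>space M. P j \<omega> \<le> c \<and> hist A T (\<lambda>i. if i = j then -1 else P i \<omega>) n = v}
     = prob {\<omega>\<in>space M. P j \<omega> \<le> c} * prob {\<omega>\<in>space M. hist A T (\<lambda>i. if i = j then -1 else P i \<omega>) n = v}"
proof -
  define S where "S = (\<lambda>k. case k of None \<Rightarrow> {j. 1 \<le> j \<and> j \<notin> H0} | Some j \<Rightarrow> {j})"
  define I where "I = insert None (Some ` {j \<in> H0. 1 \<le> j})"
  define M' where "M' = (\<lambda>k. PiM (S k) (\<lambda>_::nat. borel :: real measure))"
  define X where "X = (\<lambda>k \<omega>. restrict (\<lambda>j. P j \<omega>) (S k))"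
  have ind': "indep_vars M' X I" using ind unfolding S_def I_def M'_def X_def .
  define K1 where "K1 = {Some j}"
  define K2 where "K2 = I - {Some j}"
  have iv: "indep_var (PiM K1 M') (\<lambda>\<omega>. restrict (\<lambda>i. X i \<omega>) K1) (PiM K2 M') (\<lambda>\<omega>. restrict (\<lambda>i. X i \<omega>) K2)"
    by (rule indep_var_restrict[OF ind']) (use j in \<open>auto simp: K1_def K2_def I_def\<close>)
  define Q' where "Q' = (\<lambda>(g::nat option \<Rightarrow> nat \<Rightarrow> real) i. if i = j then -1 else if i \<in> H0 \<and> 1 \<le> i then g (Some i) i
     else if 1 \<le> i then g None i else 0)"
  have comp2: "(\<lambda>g. g k i) \<in> borel_measurable (PiM K M')" if "k \<in> K" "i \<in> S k" for K k i
  proof -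
    have a: "(\<lambda>x. x k) \<in> PiM K M' \<rightarrow>\<^sub>M PiM (S k) (\<lambda>_::nat. borel :: real measure)"
      using measurable_component_singleton[OF that(1), of M'] unfolding M'_def .
    have b: "(\<lambda>x. x i) \<in> PiM (S k) (\<lambda>_::nat. borel :: real measure) \<rightarrow>\<^sub>M borel"
      using measurable_component_singleton[OF that(2), of "\<lambda>_::nat. borel :: real measure"] .
    show ?thesis using measurable_compose[OF a b] .
  qed
  have Q'm: "(\<lambda>g. Q' g i) \<in> borel_measurable (PiM K2 M')" for i
  proof -
    consider "i = j" | "i \<noteq> j" "i \<in> H0" "1 \<le> i" | "i \<notin> H0" "1 \<le> i" | "i = 0" by force
    then show ?thesis
    proof cases
      case 1 then show ?thesis unfolding Q'_def by simp
    next
      case 2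
      have "(\<lambda>g. g (Some i) i) \<in> borel_measurable (PiM K2 M')"
        by (rule comp2) (use 2 in \<open>auto simp: K2_def I_def S_def\<close>)
      then show ?thesis using 2 unfolding Q'_def by simp
    next
      case 3
      have "(\<lambda>g. g None i) \<in> borel_measurable (PiM K2 M')"
        by (rule comp2) (use 3 in \<open>auto simp: K2_def I_def S_def\<close>)
      moreover have "i \<noteq> j" using 3 j by auto
      ultimately show ?thesis using 3 unfolding Q'_def by simp
    next
      case 4 then show ?thesis using j unfolding Q'_def by simp
    qed
  qed
  have Hm: "(\<lambda>g. hist A T (Q' g) n) \<in> PiM K2 M' \<rightarrow>\<^sub>M count_space UNIV"
    by (rule hist_measurable) (rule Q'm)
  define Xa where "Xa = {f \<in> space (PiM K1 M'). f (Some j) j \<le> c}"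
  define Xb where "Xb = (\<lambda>g. hist A T (Q' g) n) -` {v} \<inter> space (PiM K2 M')"
  have Xa: "Xa \<in> sets (PiM K1 M')"
  proof -
    have "(\<lambda>f. f (Some j) j) \<in> borel_measurable (PiM K1 M')"
      by (rule comp2) (auto simp: K1_def S_def)
    then show ?thesis unfolding Xa_def by measurable
  qed
  have Xb: "Xb \<in> sets (PiM K2 M')" unfolding Xb_def using measurable_sets[OF Hm, of "{v}"] by simp
  have rv1: "(\<lambda>\<omega>. restrict (\<lambda>i. X i \<omega>) K1) \<in> M \<rightarrow>\<^sub>M PiM K1 M'"
   and rv2: "(\<lambda>\<omega>. restrict (\<lambda>i. X i \<omega>) K2) \<in> M \<rightarrow>\<^sub>M PiM K2 M'"
    using iv unfolding indep_var_eq by auto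
  have hq: "hist A T (Q' (restrict (\<lambda>i. X i \<omega>) K2)) n = hist A T (\<lambda>i. if i = j then -1 else P i \<omega>) n" for \<omega>
  proof (rule hist_cong)
    fix i assume i: "1 \<le> i" "i \<le> n"
    show "Q' (restrict (\<lambda>i. X i \<omega>) K2) i = (if i = j then -1 else P i \<omega>)"
      using i unfolding Q'_def K2_def I_def X_def S_def by auto
  qed
  have e1: "(\<lambda>\<omega>. restrict (\<lambda>i. X i \<omega>) K1) -` Xa \<inter> space M = {\<omega>\<in>space M. P j \<omega> \<le> c}"
    using measurable_space[OF rv1] unfolding Xa_def K1_def X_def S_def by auto
  have e2: "(\<lambda>\<omega>. restrict (\<lambda>i. X i \<omega>) K2) -` Xb \<inter> space M = {\<omega>\<in>space M. hist A T (\<lambda>i. if i = j then -1 else P i \<omega>) n = v}"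
    using measurable_space[OF rv2] hq unfolding Xb_def by auto
  have e12: "(\<lambda>\<omega>. (restrict (\<lambda>i. X i \<omega>) K1, restrict (\<lambda>i. X i \<omega>) K2)) -` (Xa \<times> Xb) \<inter> space M =
     {\<omega>\<in>space M. P j \<omega> \<le> c \<and> hist A T (\<lambda>i. if i = j then -1 else P i \<omega>) n = v}"
    using e1 e2 by blast
  show ?thesis using indep_varD[OF iv Xa Xb] unfolding e1 e2 e12 .
qed

lemma finite_hists: "finite {h::history. length h = n}"
proof -
  have "finite {h::history. set h \<subseteq> UNIV \<and> length h = n}"
    by (rule finite_lists_length_eq) simp
  then show ?thesis by simp
qed

lemma card_filter_real: "finite A \<Longrightarrow> real (card {x\<in>A. Q x}) = (\<Sum>x\<in>A. if Q x then 1 else 0)"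
  by (simp add: sum.inter_filter[symmetric])

lemma (in prob_space) int_fun:
  fixes W :: "'a \<Rightarrow> 'b::countable" and G :: "'b \<Rightarrow> real"
  assumes W: "W \<in> M \<rightarrow>\<^sub>M count_space UNIV" and Ws: "finite Ws" "\<And>\<omega>. \<omega> \<in> space M \<Longrightarrow> W \<omega> \<in> Ws"
  shows "integrable M (\<lambda>\<omega>. G (W \<omega>))"
  using int_decomp(1)[OF W Ws, of "\<lambda>_. 0" "\<lambda>_. 0" G] by simp

theorem theorem3:
  fixes M :: "'a measure" and P :: "nat \<Rightarrow> 'a \<Rightarrow> real" and H0 :: "nat set"
    and A T :: "history \<Rightarrow> real" and \<alpha> :: real
  assumes prob: "prob_space M"
    and meas: "\<And>j. P j \<in> borel_measurable M"
    and alpha_range: "0 < \<alpha>" "\<alpha> < 1"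
    and levels: "\<And>\<omega> j. \<omega> \<in> space M \<Longrightarrow> 1 \<le> j \<Longrightarrow>
        0 \<le> alpha_seq A T (\<lambda>i. P i \<omega>) j \<and> alpha_seq A T (\<lambda>i. P i \<omega>) j \<le> tau_seq A T (\<lambda>i. P i \<omega>) j
        \<and> 0 < tau_seq A T (\<lambda>i. P i \<omega>) j \<and> tau_seq A T (\<lambda>i. P i \<omega>) j \<le> 1"
    and cond_unif: "\<And>t h x \<tau>. t \<in> H0 \<Longrightarrow> 1 \<le> t \<Longrightarrow> length h = t - 1 \<Longrightarrow>
        0 < x \<Longrightarrow> x < 1 \<Longrightarrow> 0 < \<tau> \<Longrightarrow> \<tau> < 1 \<Longrightarrow>
        measure M {\<omega> \<in> space M. P t \<omega> / \<tau> \<le> x \<and> P t \<omega> \<le> \<tau> \<and> hist A T (\<lambda>i. P i \<omega>) (t - 1) = h}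
        \<le> x * measure M {\<omega> \<in> space M. P t \<omega> \<le> \<tau> \<and> hist A T (\<lambda>i. P i \<omega>) (t - 1) = h}"
    and fdp_bound: "\<And>\<omega> t. \<omega> \<in> space M \<Longrightarrow> fdp_hat A T (\<lambda>i. P i \<omega>) t \<le> \<alpha>"
  shows "(\<forall>t. prob_space.expectation M (\<lambda>\<omega>. real (card (H0 \<inter> rej_set A T (\<lambda>i. P i \<omega>) t)))
              / prob_space.expectation M (\<lambda>\<omega>. max (real (card (rej_set A T (\<lambda>i. P i \<omega>) t))) 1) \<le> \<alpha>)
    \<and> ((prob_space.indep_vars M
            (\<lambda>k. PiM (case k of None \<Rightarrow> {j. 1 \<le> j \<and> j \<notin> H0} | Some j \<Rightarrow> {j}) (\<lambda>_. borel))
            (\<lambda>k \<omega>. restrict (\<lambda>j. P j \<omega>) (case k of None \<Rightarrow> {j. 1 \<le> j \<and> j \<notin> H0} | Some j \<Rightarrow> {j}))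
            (insert None (Some ` {j \<in> H0. 1 \<le> j}))
        \<and> mono_past A \<and> mono_past (\<lambda>h. 1 - T h))
       \<longrightarrow> (\<forall>t. prob_space.expectation M
              (\<lambda>\<omega>. real (card (H0 \<inter> rej_set A T (\<lambda>i. P i \<omega>) t))
                    / max (real (card (rej_set A T (\<lambda>i. P i \<omega>) t))) 1) \<le> \<alpha>))"
proof -
  interpret prob_space M by (rule prob)
  have histm: "(\<lambda>\<omega>. hist A T (\<lambda>i. P i \<omega>) n) \<in> M \<rightarrow>\<^sub>M count_space UNIV" for n
    by (rule hist_measurable) (rule meas)
  have histWs: "hist A T (\<lambda>i. P i \<omega>) n \<in> {h. length h = n}" for n \<omega> by simp
  have predh: "Measurable.pred M (\<lambda>\<omega>. hist A T (\<lambda>i. P i \<omega>) n = h)" for n h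
    using measurable_compose[OF histm[of n], of "\<lambda>v. v = h" "count_space UNIV"] by simp
  have KC: "prob {\<omega>\<in>space M. P j \<omega> \<le> A h \<and> hist A T (\<lambda>i. P i \<omega>) (j-1) = h}
      \<le> A h / T h * prob {\<omega>\<in>space M. P j \<omega> \<le> T h \<and> hist A T (\<lambda>i. P i \<omega>) (j-1) = h}"
    if j: "j \<in> H0" "1 \<le> j" for j h
  proof (cases "\<exists>\<omega>\<in>space M. hist A T (\<lambda>i. P i \<omega>) (j-1) = h")
    case False
    then have "{\<omega>\<in>space M. P j \<omega> \<le> A h \<and> hist A T (\<lambda>i. P i \<omega>) (j-1) = h} = {}"
      "{\<omega>\<in>space M. P j \<omega> \<le> T h \<and> hist A T (\<lambda>i. P i \<omega>) (j-1) = h} = {}" by auto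
    note e = this
    show ?thesis unfolding e by simp
  next
    case True
    then obtain \<omega>0 where om: "\<omega>0 \<in> space M" "hist A T (\<lambda>i. P i \<omega>0) (j-1) = h" by blast
    have lh: "length h = j - 1" using om(2) by auto
    have lv: "0 \<le> A h" "A h \<le> T h" "0 < T h" "T h \<le> 1"
      using levels[OF om(1) j(2)] om(2) by (auto simp: alpha_seq_def tau_seq_def)
    show ?thesis
    proof (rule key_cond[OF _ meas predh lv])
      fix x \<tau> :: real assume "0 < x" "x < 1" "0 < \<tau>" "\<tau> < 1"
      then show "prob {\<omega> \<in> space M. P j \<omega> / \<tau> \<le> x \<and> P j \<omega> \<le> \<tau> \<and> hist A T (\<lambda>i. P i \<omega>) (j - 1) = h}
          \<le> x * prob {\<omega> \<in> space M. P j \<omega> \<le> \<tau> \<and> hist A T (\<lambda>i. P i \<omega>) (j - 1) = h}"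
        using cond_unif[OF j lh] by simp
    qed
  qed
  define F where "F = (\<lambda>j \<omega>. alpha_seq A T (\<lambda>i. P i \<omega>) j / tau_seq A T (\<lambda>i. P i \<omega>) j *
      (if P j \<omega> \<le> tau_seq A T (\<lambda>i. P i \<omega>) j then 1 else 0))"
  have Fif: "F j \<omega> = (if P j \<omega> \<le> T (hist A T (\<lambda>i. P i \<omega>) (j-1))
       then A (hist A T (\<lambda>i. P i \<omega>) (j-1)) / T (hist A T (\<lambda>i. P i \<omega>) (j-1)) else 0)" for j \<omega>
    by (simp add: F_def alpha_seq_def tau_seq_def)
  have Fint: "integrable M (F j)" for j
  proof -
    have "integrable M (\<lambda>\<omega>. if P j \<omega> \<le> T (hist A T (\<lambda>i. P i \<omega>) (j-1))
       then A (hist A T (\<lambda>i. P i \<omega>) (j-1)) / T (hist A T (\<lambda>i. P i \<omega>) (j-1)) else 0)"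
      by (rule int_decomp(1)[OF histm finite_hists histWs meas])
    then show ?thesis unfolding Fif[abs_def] .
  qed
  have Fnn: "0 \<le> F j \<omega>" if "\<omega> \<in> space M" "1 \<le> j" for j \<omega>
    using levels[OF that] unfolding F_def by auto
  have Fsum: "(\<Sum>j\<in>{1..t}. F j \<omega>) = fdp_hat A T (\<lambda>i. P i \<omega>) t * max (real (card (rej_set A T (\<lambda>i. P i \<omega>) t))) 1" for t \<omega>
    unfolding fdp_hat_def F_def by simp
  define Dt where "Dt = (\<lambda>t (v::history). max (real (card {k\<in>{1..t}. fst (v!(k-1))})) 1)"
  have Dhist: "max (real (card (rej_set A T p t))) 1 = Dt t (hist A T p t)" for p t
    by (simp add: Dt_def rej_set_hist)
  have Dt1: "1 \<le> Dt t v" for t v by (simp add: Dt_def)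
  have Dint: "integrable M (\<lambda>\<omega>. max (real (card (rej_set A T (\<lambda>i. P i \<omega>) t))) 1)" for t
    unfolding Dhist by (rule int_fun[OF histm finite_hists histWs])
  have Nsum: "real (card (H0 \<inter> rej_set A T (\<lambda>i. P i \<omega>) t)) =
     (\<Sum>j\<in>H0 \<inter> {1..t}. if P j \<omega> \<le> A (hist A T (\<lambda>i. P i \<omega>) (j-1)) then 1::real else 0)" for t \<omega>
  proof -
    have "H0 \<inter> rej_set A T (\<lambda>i. P i \<omega>) t = {j \<in> H0 \<inter> {1..t}. P j \<omega> \<le> A (hist A T (\<lambda>i. P i \<omega>) (j-1))}"
      unfolding rej_set_def alpha_seq_def by auto
    moreover have "finite (H0 \<inter> {1..t})" by simp
    ultimately show ?thesis using card_filter_real[of "H0 \<inter> {1..t}" "\<lambda>j. P j \<omega> \<le> A (hist A T (\<lambda>i. P i \<omega>) (j-1))"]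
      by (simp only:)
  qed
  have Iint: "integrable M (\<lambda>\<omega>. if P j \<omega> \<le> A (hist A T (\<lambda>i. P i \<omega>) (j-1)) then 1::real else 0)" for j
    using int_decomp(1)[OF histm[of "j-1"] finite_hists[of "j-1"] histWs meas[of j], where c=A and g="\<lambda>_. 1"] by simp
  have partA: "\<forall>t. expectation (\<lambda>\<omega>. real (card (H0 \<inter> rej_set A T (\<lambda>i. P i \<omega>) t)))
              / expectation (\<lambda>\<omega>. max (real (card (rej_set A T (\<lambda>i. P i \<omega>) t))) 1) \<le> \<alpha>"
  proof
    fix t
    let ?D = "\<lambda>\<omega>. max (real (card (rej_set A T (\<lambda>i. P i \<omega>) t))) 1"
    have Rj: "expectation (\<lambda>\<omega>. if P j \<omega> \<le> A (hist A T (\<lambda>i. P i \<omega>) (j-1)) then 1::real else 0) \<le> expectation (F j)"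
      if j: "j \<in> H0" "1 \<le> j" for j
    proof -
      have "expectation (\<lambda>\<omega>. if P j \<omega> \<le> A (hist A T (\<lambda>i. P i \<omega>) (j-1)) then 1::real else 0)
         = (\<Sum>h\<in>{h. length h = j-1}. 1 * prob {\<omega>\<in>space M. P j \<omega> \<le> A h \<and> hist A T (\<lambda>i. P i \<omega>) (j-1) = h})"
        using int_decomp(2)[OF histm[of "j-1"] finite_hists[of "j-1"] histWs meas[of j], where c=A and g="\<lambda>_. 1"] by simp
      also have "\<dots> \<le> (\<Sum>h\<in>{h. length h = j-1}. A h / T h * prob {\<omega>\<in>space M. P j \<omega> \<le> T h \<and> hist A T (\<lambda>i. P i \<omega>) (j-1) = h})"
        using KC[OF j] by (intro sum_mono) simp
      also have "\<dots> = expectation (F j)"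
        unfolding Fif[abs_def] by (rule int_decomp(2)[OF histm finite_hists histWs meas, symmetric])
      finally show ?thesis .
    qed
    have "expectation (\<lambda>\<omega>. real (card (H0 \<inter> rej_set A T (\<lambda>i. P i \<omega>) t)))
        = expectation (\<lambda>\<omega>. \<Sum>j\<in>H0 \<inter> {1..t}. if P j \<omega> \<le> A (hist A T (\<lambda>i. P i \<omega>) (j-1)) then 1::real else 0)"
      unfolding Nsum ..
    also have "\<dots> = (\<Sum>j\<in>H0 \<inter> {1..t}. expectation (\<lambda>\<omega>. if P j \<omega> \<le> A (hist A T (\<lambda>i. P i \<omega>) (j-1)) then 1::real else 0))"
      by (rule Bochner_Integration.integral_sum) (rule Iint)
    also have "\<dots> \<le> (\<Sum>j\<in>H0 \<inter> {1..t}. expectation (F j))"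
      by (intro sum_mono Rj) auto
    also have "\<dots> \<le> (\<Sum>j\<in>{1..t}. expectation (F j))"
      by (intro sum_mono2 integral_nonneg_AE AE_I2 Fnn) auto
    also have "\<dots> = expectation (\<lambda>\<omega>. \<Sum>j\<in>{1..t}. F j \<omega>)"
      by (rule Bochner_Integration.integral_sum[symmetric]) (rule Fint)
    also have "\<dots> \<le> expectation (\<lambda>\<omega>. \<alpha> * ?D \<omega>)"
    proof (rule integral_mono)
      show "integrable M (\<lambda>\<omega>. \<Sum>j\<in>{1..t}. F j \<omega>)" by (intro Bochner_Integration.integrable_sum Fint)
      show "integrable M (\<lambda>\<omega>. \<alpha> * ?D \<omega>)" using Dint by simp
      fix \<omega> assume om: "\<omega> \<in> space M"
      show "(\<Sum>j\<in>{1..t}. F j \<omega>) \<le> \<alpha> * ?D \<omega>"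
        unfolding Fsum using fdp_bound[OF om, of t] by (intro mult_right_mono) auto
    qed
    also have "\<dots> = \<alpha> * expectation ?D" by simp
    finally have num: "expectation (\<lambda>\<omega>. real (card (H0 \<inter> rej_set A T (\<lambda>i. P i \<omega>) t))) \<le> \<alpha> * expectation ?D" .
    have "expectation (\<lambda>_. 1::real) \<le> expectation ?D"
      by (rule integral_mono) (use Dint in auto)
    then have den: "1 \<le> expectation ?D" by (simp add: prob_space)
    show "expectation (\<lambda>\<omega>. real (card (H0 \<inter> rej_set A T (\<lambda>i. P i \<omega>) t))) / expectation ?D \<le> \<alpha>"
      using num den by (simp add: divide_le_eq)
  qed
  have partB: "(indep_vars
            (\<lambda>k. PiM (case k of None \<Rightarrow> {j. 1 \<le> j \<and> j \<notin> H0} | Some j \<Rightarrow> {j}) (\<lambda>_. borel))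
            (\<lambda>k \<omega>. restrict (\<lambda>j. P j \<omega>) (case k of None \<Rightarrow> {j. 1 \<le> j \<and> j \<notin> H0} | Some j \<Rightarrow> {j}))
            (insert None (Some ` {j \<in> H0. 1 \<le> j}))
        \<and> mono_past A \<and> mono_past (\<lambda>h. 1 - T h))
       \<longrightarrow> (\<forall>t. expectation
              (\<lambda>\<omega>. real (card (H0 \<inter> rej_set A T (\<lambda>i. P i \<omega>) t))
                    / max (real (card (rej_set A T (\<lambda>i. P i \<omega>) t))) 1) \<le> \<alpha>)"
  proof (intro impI allI)
    assume H: "indep_vars
            (\<lambda>k. PiM (case k of None \<Rightarrow> {j. 1 \<le> j \<and> j \<notin> H0} | Some j \<Rightarrow> {j}) (\<lambda>_. borel))
            (\<lambda>k \<omega>. restrict (\<lambda>j. P j \<omega>) (case k of None \<Rightarrow> {j. 1 \<le> j \<and> j \<notin> H0} | Some j \<Rightarrow> {j}))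
            (insert None (Some ` {j \<in> H0. 1 \<le> j}))
        \<and> mono_past A \<and> mono_past (\<lambda>h. 1 - T h)"
    then have ind: "indep_vars
            (\<lambda>k. PiM (case k of None \<Rightarrow> {j. 1 \<le> j \<and> j \<notin> H0} | Some j \<Rightarrow> {j}) (\<lambda>_. borel))
            (\<lambda>k \<omega>. restrict (\<lambda>j. P j \<omega>) (case k of None \<Rightarrow> {j. 1 \<le> j \<and> j \<notin> H0} | Some j \<Rightarrow> {j}))
            (insert None (Some ` {j \<in> H0. 1 \<le> j}))"
      and mA: "mono_past A" and mT: "mono_past (\<lambda>h. 1 - T h)" by auto
    fix t
    define J where "J = H0 \<inter> {1..t}"
    define Fd where "Fd = (\<lambda>j \<omega>. F j \<omega> / Dt t (hist A T (\<lambda>i. P i \<omega>) t))"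
    define G where "G = (\<lambda>j \<omega>. (if P j \<omega> \<le> A (hist A T (\<lambda>i. P i \<omega>) (j-1)) then 1::real else 0) / Dt t (hist A T (\<lambda>i. P i \<omega>) t))"
    have Gsum: "real (card (H0 \<inter> rej_set A T (\<lambda>i. P i \<omega>) t)) / max (real (card (rej_set A T (\<lambda>i. P i \<omega>) t))) 1
        = (\<Sum>j\<in>J. G j \<omega>)" for \<omega>
      unfolding Nsum Dhist G_def J_def by (simp add: sum_divide_distrib)
    have Fdsum: "(\<Sum>j\<in>{1..t}. Fd j \<omega>) = fdp_hat A T (\<lambda>i. P i \<omega>) t" for \<omega>
    proof -
      have "(\<Sum>j\<in>{1..t}. Fd j \<omega>) = (\<Sum>j\<in>{1..t}. F j \<omega>) / Dt t (hist A T (\<lambda>i. P i \<omega>) t)"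
        unfolding Fd_def by (simp add: sum_divide_distrib)
      also have "\<dots> = fdp_hat A T (\<lambda>i. P i \<omega>) t"
      proof -
        have "Dt t (hist A T (\<lambda>i. P i \<omega>) t) \<noteq> 0" using Dt1[of t "hist A T (\<lambda>i. P i \<omega>) t"] by linarith
        then show ?thesis unfolding Fsum Dhist by simp
      qed
      finally show ?thesis .
    qed
    have Fdint: "integrable M (Fd j)" if "j \<in> {1..t}" for j
    proof -
      define \<Phi> where "\<Phi> = (\<lambda>v::history. (if snd (v!(j-1)) then A (take (j-1) v) / T (take (j-1) v) else 0) / Dt t v)"
      have jt: "j - 1 \<le> t" using that by auto
      have "Fd j \<omega> = \<Phi> (hist A T (\<lambda>i. P i \<omega>) t)" for \<omega>
        using that hist_nth[of j t A T "\<lambda>i. P i \<omega>"] hist_take[OF jt, of A T "\<lambda>i. P i \<omega>"]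
        unfolding Fd_def Fif \<Phi>_def by simp
      then have e: "Fd j = (\<lambda>\<omega>. \<Phi> (hist A T (\<lambda>i. P i \<omega>) t))" by (rule ext)
      show ?thesis unfolding e by (rule int_fun[OF histm finite_hists histWs])
    qed
    have Fdnn: "0 \<le> Fd j \<omega>" if "\<omega> \<in> space M" "1 \<le> j" for j \<omega>
    proof -
      have "0 \<le> Dt t (hist A T (\<lambda>i. P i \<omega>) t)" using Dt1[of t "hist A T (\<lambda>i. P i \<omega>) t"] by linarith
      then show ?thesis unfolding Fd_def using Fnn[OF that] by (rule divide_nonneg_nonneg[rotated])
    qed
    have key: "integrable M (G j) \<and> expectation (G j) \<le> expectation (Fd j)" if jJ: "j \<in> J" for j
    proof -
      have j: "j \<in> H0" "1 \<le> j" "j \<le> t" using jJ unfolding J_def by auto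
      define Q where "Q = (\<lambda>\<omega> i. if i = j then -1 else P i \<omega>)"
      have Qm: "(\<lambda>\<omega>. Q \<omega> i) \<in> borel_measurable M" for i
        by (cases "i = j") (simp_all add: Q_def meas)
      have Vm: "(\<lambda>\<omega>. hist A T (Q \<omega>) n) \<in> M \<rightarrow>\<^sub>M count_space UNIV" for n
        by (rule hist_measurable) (rule Qm)
      have VWs: "hist A T (Q \<omega>) n \<in> {h. length h = n}" for \<omega> n by simp
      have hQP: "hist A T (Q \<omega>) (j-1) = hist A T (\<lambda>i. P i \<omega>) (j-1)" for \<omega>
        by (rule hist_cong) (auto simp: Q_def)
      have tk: "take (j-1) (hist A T (Q \<omega>) t) = hist A T (\<lambda>i. P i \<omega>) (j-1)" for \<omega>
        using hist_take[of "j-1" t A T "Q \<omega>"] hQP[of \<omega>] j by simp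
      have indQ: "prob {\<omega>\<in>space M. P j \<omega> \<le> c \<and> hist A T (Q \<omega>) n = v}
          = prob {\<omega>\<in>space M. P j \<omega> \<le> c} * prob {\<omega>\<in>space M. hist A T (Q \<omega>) n = v}" for c n v
        using indep_hall[OF ind j(1,2), of c A T n v] by (simp add: Q_def)
      have Gi: "G j \<omega> = (if P j \<omega> \<le> A (take (j-1) (hist A T (Q \<omega>) t)) then 1 / Dt t (hist A T (Q \<omega>) t) else 0)"
        if om: "\<omega> \<in> space M" for \<omega>
      proof (cases "P j \<omega> \<le> A (hist A T (\<lambda>i. P i \<omega>) (j-1))")
        case True
        have lv: "0 \<le> A (hist A T (\<lambda>i. P i \<omega>) (j-1))" "A (hist A T (\<lambda>i. P i \<omega>) (j-1)) \<le> T (hist A T (\<lambda>i. P i \<omega>) (j-1))"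
          "0 < T (hist A T (\<lambda>i. P i \<omega>) (j-1))"
          using levels[OF om j(2)] by (auto simp: alpha_seq_def tau_seq_def)
        have "hist A T (\<lambda>i. P i \<omega>) t = hist A T (Q \<omega>) t"
          by (rule hist_eq[where j=j]) (use True lv hQP[of \<omega>] in \<open>auto simp: Q_def\<close>)
        then show ?thesis using True tk[of \<omega>] by (simp add: G_def)
      next
        case False then show ?thesis using tk[of \<omega>] by (simp add: G_def)
      qed
      have Fii: "(if P j \<omega> \<le> T (take (j-1) (hist A T (Q \<omega>) t))
          then A (take (j-1) (hist A T (Q \<omega>) t)) / T (take (j-1) (hist A T (Q \<omega>) t)) / Dt t (hist A T (Q \<omega>) t) else 0)
          \<le> Fd j \<omega>" if om: "\<omega> \<in> space M" for \<omega>
      proof (cases "P j \<omega> \<le> T (hist A T (\<lambda>i. P i \<omega>) (j-1))")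
        case True
        have lv: "0 \<le> A (hist A T (\<lambda>i. P i \<omega>) (j-1))" "A (hist A T (\<lambda>i. P i \<omega>) (j-1)) \<le> T (hist A T (\<lambda>i. P i \<omega>) (j-1))"
          "0 < T (hist A T (\<lambda>i. P i \<omega>) (j-1))"
          using levels[OF om j(2)] by (auto simp: alpha_seq_def tau_seq_def)
        have "card (rej_set A T (\<lambda>i. P i \<omega>) t) \<le> card (rej_set A T (Q \<omega>) t)"
          by (rule rej_mono[OF mA mT, where j=j]) (use True lv hQP[of \<omega>] j in \<open>auto simp: Q_def\<close>)
        then have Dle: "Dt t (hist A T (\<lambda>i. P i \<omega>) t) \<le> Dt t (hist A T (Q \<omega>) t)"
          unfolding Dhist[symmetric] by simp
        have nn: "0 \<le> A (hist A T (\<lambda>i. P i \<omega>) (j-1)) / T (hist A T (\<lambda>i. P i \<omega>) (j-1))" using lv by simp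
        have pos: "0 < Dt t (hist A T (Q \<omega>) t) * Dt t (hist A T (\<lambda>i. P i \<omega>) t)"
          using Dt1[of t] by (simp add: order_less_le_trans[OF zero_less_one])
        show ?thesis using True tk[of \<omega>] divide_left_mono[OF Dle nn pos] by (simp add: Fd_def Fif)
      next
        case False then show ?thesis using tk[of \<omega>] by (simp add: Fd_def Fif)
      qed
      let ?L = "\<lambda>\<omega>. if P j \<omega> \<le> A (take (j-1) (hist A T (Q \<omega>) t)) then 1 / Dt t (hist A T (Q \<omega>) t) else 0"
      let ?R = "\<lambda>\<omega>. if P j \<omega> \<le> T (take (j-1) (hist A T (Q \<omega>) t))
          then A (take (j-1) (hist A T (Q \<omega>) t)) / T (take (j-1) (hist A T (Q \<omega>) t)) / Dt t (hist A T (Q \<omega>) t) else 0"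
      have Lint: "integrable M ?L"
        by (rule int_decomp(1)[OF Vm[of t] finite_hists[of t] VWs meas[of j], where c="\<lambda>v. A (take (j-1) v)" and g="\<lambda>v. 1 / Dt t v"])
      have Rint: "integrable M ?R"
        by (rule int_decomp(1)[OF Vm[of t] finite_hists[of t] VWs meas[of j], where c="\<lambda>v. T (take (j-1) v)" and g="\<lambda>v. A (take (j-1) v) / T (take (j-1) v) / Dt t v"])
      have "integrable M (G j) = integrable M ?L"
        by (rule Bochner_Integration.integrable_cong[OF refl]) (rule Gi)
      then have Gint: "integrable M (G j)" using Lint by simp
      have iii: "expectation ?L \<le> expectation ?R"
      proof -
        have "expectation ?L = (\<Sum>v\<in>{v. length v = t}. 1 / Dt t v * prob {\<omega>\<in>space M. P j \<omega> \<le> A (take (j-1) v) \<and> hist A T (Q \<omega>) t = v})"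
          by (rule int_decomp(2)[OF Vm[of t] finite_hists[of t] VWs meas[of j], where c="\<lambda>v. A (take (j-1) v)" and g="\<lambda>v. 1 / Dt t v"])
        also have "\<dots> \<le> (\<Sum>v\<in>{v. length v = t}. A (take (j-1) v) / T (take (j-1) v) / Dt t v * prob {\<omega>\<in>space M. P j \<omega> \<le> T (take (j-1) v) \<and> hist A T (Q \<omega>) t = v})"
        proof (rule sum_mono)
          fix v :: history assume "v \<in> {v. length v = t}"
          define h where "h = take (j-1) v"
          define pv where "pv = prob {\<omega>\<in>space M. hist A T (Q \<omega>) t = v}"
          define pa where "pa = prob {\<omega>\<in>space M. P j \<omega> \<le> A h}"
          define pt where "pt = prob {\<omega>\<in>space M. P j \<omega> \<le> T h}"
          have main: "pa * pv \<le> A h / T h * pt * pv"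
          proof (cases "pv = 0")
            case True then show ?thesis by simp
          next
            case False
            then have "{\<omega>\<in>space M. hist A T (Q \<omega>) t = v} \<noteq> {}" unfolding pv_def by (metis measure_empty)
            then obtain \<omega>0 where om0: "\<omega>0 \<in> space M" "hist A T (Q \<omega>0) t = v" by auto
            let ?pH = "prob {\<omega>\<in>space M. hist A T (Q \<omega>) (j-1) = h}"
            have sub: "{\<omega>\<in>space M. hist A T (Q \<omega>) t = v} \<subseteq> {\<omega>\<in>space M. hist A T (Q \<omega>) (j-1) = h}"
              using tk hQP unfolding h_def by auto
            have evH: "{\<omega>\<in>space M. hist A T (Q \<omega>) (j-1) = h} \<in> events"
            proof -
              have "{\<omega>\<in>space M. hist A T (Q \<omega>) (j-1) = h} = (\<lambda>\<omega>. hist A T (Q \<omega>) (j-1)) -` {h} \<inter> space M" by auto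
              then show ?thesis using measurable_sets[OF Vm[of "j-1"], of "{h}"] by simp
            qed
            have "pv \<le> ?pH" unfolding pv_def by (rule finite_measure_mono[OF sub evH])
            moreover have "0 \<le> pv" unfolding pv_def by simp
            ultimately have pH: "0 < ?pH" using False by linarith
            have KC': "prob {\<omega>\<in>space M. P j \<omega> \<le> A h \<and> hist A T (Q \<omega>) (j-1) = h}
                \<le> A h / T h * prob {\<omega>\<in>space M. P j \<omega> \<le> T h \<and> hist A T (Q \<omega>) (j-1) = h}"
              unfolding hQP by (rule KC[OF j(1,2)])
            then have "pa * ?pH \<le> (A h / T h * pt) * ?pH" unfolding indQ pa_def pt_def by (simp add: mult.assoc)
            then have "pa \<le> A h / T h * pt" using pH by (rule mult_right_le_imp_le)
            then show ?thesis using \<open>0 \<le> pv\<close> by (intro mult_right_mono)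
          qed
          have D0: "0 < Dt t v" using Dt1[of t v] by linarith
          have "1 / Dt t v * (pa * pv) \<le> 1 / Dt t v * (A h / T h * pt * pv)"
            using main D0 by (intro mult_left_mono) auto
          then show "1 / Dt t v * prob {\<omega>\<in>space M. P j \<omega> \<le> A (take (j-1) v) \<and> hist A T (Q \<omega>) t = v}
              \<le> A (take (j-1) v) / T (take (j-1) v) / Dt t v * prob {\<omega>\<in>space M. P j \<omega> \<le> T (take (j-1) v) \<and> hist A T (Q \<omega>) t = v}"
            unfolding indQ h_def[symmetric] pa_def[symmetric] pt_def[symmetric] pv_def[symmetric]
            by (simp add: field_simps)
        qed
        also have "\<dots> = expectation ?R"
          by (rule int_decomp(2)[OF Vm[of t] finite_hists[of t] VWs meas[of j], where c="\<lambda>v. T (take (j-1) v)" and g="\<lambda>v. A (take (j-1) v) / T (take (j-1) v) / Dt t v", symmetric])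
        finally show ?thesis .
      qed
      have "expectation (G j) = expectation ?L"
        by (rule Bochner_Integration.integral_cong[OF refl]) (rule Gi)
      also have "\<dots> \<le> expectation ?R" by (rule iii)
      also have "\<dots> \<le> expectation (Fd j)"
        by (rule integral_mono[OF Rint Fdint Fii]) (use j in auto)
      finally show ?thesis using Gint by simp
    qed
    have "expectation (\<lambda>\<omega>. real (card (H0 \<inter> rej_set A T (\<lambda>i. P i \<omega>) t))
                    / max (real (card (rej_set A T (\<lambda>i. P i \<omega>) t))) 1)
        = expectation (\<lambda>\<omega>. \<Sum>j\<in>J. G j \<omega>)"
      unfolding Gsum ..
    also have "\<dots> = (\<Sum>j\<in>J. expectation (G j))"
      by (rule Bochner_Integration.integral_sum) (use key in blast)
    also have "\<dots> \<le> (\<Sum>j\<in>J. expectation (Fd j))"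
      by (intro sum_mono) (use key in blast)
    also have "\<dots> \<le> (\<Sum>j\<in>{1..t}. expectation (Fd j))"
      by (intro sum_mono2 integral_nonneg_AE AE_I2 Fdnn) (auto simp: J_def)
    also have "\<dots> = expectation (\<lambda>\<omega>. \<Sum>j\<in>{1..t}. Fd j \<omega>)"
      by (rule Bochner_Integration.integral_sum[symmetric]) (rule Fdint)
    also have "\<dots> = expectation (\<lambda>\<omega>. fdp_hat A T (\<lambda>i. P i \<omega>) t)"
      unfolding Fdsum ..
    also have "\<dots> \<le> expectation (\<lambda>_. \<alpha>)"
    proof (rule integral_mono)
      show "integrable M (\<lambda>\<omega>. fdp_hat A T (\<lambda>i. P i \<omega>) t)"
        unfolding Fdsum[symmetric] by (intro Bochner_Integration.integrable_sum Fdint)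
    qed (use fdp_bound in auto)
    also have "\<dots> = \<alpha>" by (simp add: prob_space)
    finally show "expectation (\<lambda>\<omega>. real (card (H0 \<inter> rej_set A T (\<lambda>i. P i \<omega>) t))
                    / max (real (card (rej_set A T (\<lambda>i. P i \<omega>) t))) 1) \<le> \<alpha>" .
  qed
  show ?thesis using partA partB by blast
qed

end
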